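(* Let $\Gamma$ be a valued structure with finite signature $\tau$ and domain $C$, let $\Delta$ be a valued $\tau$-structure with finite domain $D$ such that there is a fractional homomorphism from $\Delta$ to $\Gamma$, and let $m\ge2$ be an integer. If $\Gamma$ has an $m$-ary fully symmetric fractional polymorphism, then there is a fractional homomorphism from $\mathcal{P}^m(\Delta)$ to $\Gamma$.
   Context: A valued structure consists of a signature $\tau$ of function symbols with arities, a domain, and for each $f\in\tau$ a cost function from the domain to the power $\mathrm{ar}(f)$ into $\mathbb{Q}\cup\{+\infty\}$. A fractional homomorphism from a valued $\tau$-structure $\Delta$ (domain $D$) to $\Gamma$ (domain $C$) is a map $\omega\colon C^D\to\mathbb{Q}_{\ge0}$ with finite support and $\sum_g\omega(g)=1$ such that $\sum_g\omega(g)f^\Gamma(g(a))\le f^\Delta(a)$ for all $f\in\tau$, $a\in D^{\mathrm{ar}(f)}$ ($g$ applied componentwise). An $m$-ary fractional polymorphism of $\Gamma$ is a map $\omega$ from operations $C^m\to C$ to $\mathbb{Q}_{\ge0}$ with finite support, $\sum_g\omega(g)=1$, and $\sum_g\omega(g)f^\Gamma(g(a^1,\dots,a^m))\le\frac1m\sum_{i=1}^m f^\Gamma(a^i)$ for all $f\in\tau$, $a^1,\dots,a^m\in C^{\mathrm{ar}(f)}$. It is fully symmetric if every operation in its support satisfies $g(x_1,\dots,x_m)=g(x_{\pi(1)},\dots,x_{\pi(m)})$ for all permutations $\pi$. The multiset structure $\mathcal{P}^m(\Delta)$ is the valued $\tau$-structure whose domain is the set of multisets of size $m$ of elements of $D$,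 with, for $k$-ary $f\in\tau$ and multisets $\alpha_1,\dots,\alpha_k$, $f^{\mathcal{P}^m(\Delta)}(\alpha_1,\dots,\alpha_k)=\frac1m\min\sum_{i=1}^m f^\Delta(t^1_i,\dots,t^k_i)$, the minimum over all $t^1,\dots,t^k\in D^m$ such that the multiset of coordinates of $t^l$ is $\alpha_l$ for each $l$. *)

theory Defs
  imports "HOL-Library.Extended_Real" "HOL-Library.Multiset" "HOL-Library.FuncSet"
          "HOL-Combinatorics.Permutations"
begin

text \<open>A valued structure over (tau, ar) is given by a domain A (a set) and a cost map
  F :: 's => 'a list => ereal, where F f is only meaningful on lists of length ar f
  with entries in A.\<close>

definition rat_or_inf :: "ereal \<Rightarrow> bool" where
  "rat_or_inf x \<longleftrightarrow> x = \<infinity> \<or> (\<exists>q::rat. x = ereal (of_rat q))"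

definition valued_structure ::
  "'s set \<Rightarrow> ('s \<Rightarrow> nat) \<Rightarrow> 'a set \<Rightarrow> ('s \<Rightarrow> 'a list \<Rightarrow> ereal) \<Rightarrow> bool" where
  "valued_structure tau ar A F \<longleftrightarrow>
     (\<forall>f\<in>tau. \<forall>a. length a = ar f \<and> set a \<subseteq> A \<longrightarrow> rat_or_inf (F f a))"

definition supp_w :: "('x \<Rightarrow> rat) \<Rightarrow> 'x set" where
  "supp_w w = {g. w g \<noteq> 0}"

definition frac_hom ::
  "'s set \<Rightarrow> ('s \<Rightarrow> nat) \<Rightarrow> 'a set \<Rightarrow> ('s \<Rightarrow> 'a list \<Rightarrow> ereal)
   \<Rightarrow> 'b set \<Rightarrow> ('s \<Rightarrow> 'b list \<Rightarrow> ereal) \<Rightarrow> (('a \<Rightarrow> 'b) \<Rightarrow> rat) \<Rightarrow> bool" where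
  "frac_hom tau ar A FA B FB w \<longleftrightarrow>
     finite (supp_w w) \<and> (\<forall>g. w g \<ge> 0) \<and> (\<forall>g\<in>supp_w w. g \<in> A \<rightarrow> B) \<and>
     sum w (supp_w w) = 1 \<and>
     (\<forall>f\<in>tau. \<forall>a. length a = ar f \<and> set a \<subseteq> A \<longrightarrow>
        (\<Sum>g\<in>supp_w w. ereal (of_rat (w g)) * FB f (map g a)) \<le> FA f a)"

text \<open>m-ary fractional polymorphism; an m-ary operation on C is represented as a
  function on lists, only its values on lists of length m with entries in C matter.\<close>
definition frac_pol ::
  "'s set \<Rightarrow> ('s \<Rightarrow> nat) \<Rightarrow> 'c set \<Rightarrow> ('s \<Rightarrow> 'c list \<Rightarrow> ereal) \<Rightarrow> nat
   \<Rightarrow> (('c list \<Rightarrow> 'c) \<Rightarrow> rat) \<Rightarrow> bool" where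
  "frac_pol tau ar C F m w \<longleftrightarrow>
     finite (supp_w w) \<and> (\<forall>g. w g \<ge> 0) \<and>
     (\<forall>g\<in>supp_w w. \<forall>xs. length xs = m \<and> set xs \<subseteq> C \<longrightarrow> g xs \<in> C) \<and>
     sum w (supp_w w) = 1 \<and>
     (\<forall>f\<in>tau. \<forall>as. length as = m \<and> (\<forall>a\<in>set as. length a = ar f \<and> set a \<subseteq> C) \<longrightarrow>
        (\<Sum>g\<in>supp_w w. ereal (of_rat (w g)) *
            F f (map (\<lambda>j. g (map (\<lambda>a. a ! j) as)) [0..<ar f]))
        \<le> ereal (1 / real m) * (\<Sum>a\<leftarrow>as. F f a))"

definition fully_symmetric :: "'c set \<Rightarrow> nat \<Rightarrow> (('c list \<Rightarrow> 'c) \<Rightarrow> rat) \<Rightarrow> bool" where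
  "fully_symmetric C m w \<longleftrightarrow>
     (\<forall>g\<in>supp_w w. \<forall>xs \<pi>. length xs = m \<and> set xs \<subseteq> C \<and> \<pi> permutes {..<m} \<longrightarrow>
        g xs = g (map (\<lambda>i. xs ! \<pi> i) [0..<m]))"

definition multiset_dom :: "nat \<Rightarrow> 'd set \<Rightarrow> 'd multiset set" where
  "multiset_dom m D = {\<alpha>. size \<alpha> = m \<and> set_mset \<alpha> \<subseteq> D}"

definition multiset_cost ::
  "nat \<Rightarrow> 'd set \<Rightarrow> ('s \<Rightarrow> 'd list \<Rightarrow> ereal) \<Rightarrow> 's \<Rightarrow> 'd multiset list \<Rightarrow> ereal" where
  "multiset_cost m D F f \<alpha>s =
     ereal (1 / real m) *
     Min {(\<Sum>i<m. F f (map (\<lambda>t. t ! i) ts)) | ts.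
            length ts = length \<alpha>s \<and>
            (\<forall>l<length \<alpha>s. length (ts ! l) = m \<and> set (ts ! l) \<subseteq> D \<and> mset (ts ! l) = \<alpha>s ! l)}"

end

theory Submission
  imports Defs
begin

lemma roi_not_minf: "rat_or_inf x \<Longrightarrow> x \<noteq> -\<infinity>"
  unfolding rat_or_inf_def by auto

lemma ereal_c_distrib:
  fixes a b :: ereal
  assumes "c \<ge> 0" "a \<noteq> -\<infinity>" "b \<noteq> -\<infinity>"
  shows "ereal c * (a + b) = ereal c * a + ereal c * b"
  using assms by (cases a; cases b; cases "c = 0") (auto simp: distrib_left)

lemma ereal_c_mult_not_minf:
  fixes a :: ereal
  assumes "c \<ge> 0" "a \<noteq> -\<infinity>"
  shows "ereal c * a \<noteq> -\<infinity>"
  using assms by (cases a; cases "c = 0") auto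

lemma sum_not_minf:
  fixes x :: "'i \<Rightarrow> ereal"
  shows "(\<forall>i\<in>A. x i \<noteq> -\<infinity>) \<Longrightarrow> sum x A \<noteq> -\<infinity>"
  by (induct A rule: infinite_finite_induct) auto

lemma sum_c_distrib:
  fixes x :: "'i \<Rightarrow> ereal"
  assumes "c \<ge> 0" "\<forall>i\<in>A. x i \<noteq> -\<infinity>"
  shows "ereal c * sum x A = (\<Sum>i\<in>A. ereal c * x i)"
  using assms
proof (induct A rule: infinite_finite_induct)
  case (insert a F)
  then show ?case
    by (simp add: ereal_c_distrib sum_not_minf)
qed auto

lemma sym_eq:
  assumes "fully_symmetric C m w" "p \<in> supp_w w" "mset xs = mset ys"
    "length ys = m" "set ys \<subseteq> D" "\<forall>x\<in>D. g x \<in> C"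
  shows "p (map g xs) = p (map g ys)"
proof -
  obtain \<pi> where pi: "\<pi> permutes {..<length ys}" "permute_list \<pi> ys = xs"
    using mset_eq_permutation[OF assms(3)] by blast
  have "map g xs = permute_list \<pi> (map g ys)"
    using pi permute_list_map[of \<pi> ys g] by simp
  also have "\<dots> = map (\<lambda>i. map g ys ! \<pi> i) [0..<m]"
    using assms(4) by (simp add: permute_list_def)
  finally have e: "map g xs = map (\<lambda>i. map g ys ! \<pi> i) [0..<m]" .
  have "set (map g ys) \<subseteq> C" using assms(5,6) by auto
  then have "p (map g ys) = p (map (\<lambda>i. map g ys ! \<pi> i) [0..<m])"
    using assms(1,2,4) pi(1) unfolding fully_symmetric_def by auto
  then show ?thesis using e by simp
qed

theorem lemma9:
  fixes tau :: "'s set" and ar :: "'s \<Rightarrow> nat"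
    and C :: "'c set" and FG :: "'s \<Rightarrow> 'c list \<Rightarrow> ereal"
    and D :: "'d set" and FD :: "'s \<Rightarrow> 'd list \<Rightarrow> ereal"
    and m :: nat
  assumes "finite tau"
    and "valued_structure tau ar C FG"
    and "valued_structure tau ar D FD"
    and "finite D"
    and "\<exists>w. frac_hom tau ar D FD C FG w"
    and "m \<ge> 2"
    and "\<exists>w. frac_pol tau ar C FG m w \<and> fully_symmetric C m w"
  shows "\<exists>w. frac_hom tau ar (multiset_dom m D) (multiset_cost m D FD) C FG w"
proof -
  obtain w1 where w1: "frac_hom tau ar D FD C FG w1" using assms(5) by blast
  obtain w2 where w2: "frac_pol tau ar C FG m w2" and sy: "fully_symmetric C m w2"
    using assms(7) by blast
  define S1 where "S1 = supp_w w1"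
  define S2 where "S2 = supp_w w2"
  have fS1: "finite S1" and w1nn: "\<And>g. w1 g \<ge> 0" and S1C: "\<And>g. g \<in> S1 \<Longrightarrow> g \<in> D \<rightarrow> C"
    and s1: "sum w1 S1 = 1"
    and hom1: "\<And>f a. f \<in> tau \<Longrightarrow> length a = ar f \<Longrightarrow> set a \<subseteq> D \<Longrightarrow>
        (\<Sum>g\<in>S1. ereal (of_rat (w1 g)) * FG f (map g a)) \<le> FD f a"
    using w1 unfolding frac_hom_def S1_def by auto
  have fS2: "finite S2" and w2nn: "\<And>g. w2 g \<ge> 0"
    and S2C: "\<And>p xs. p \<in> S2 \<Longrightarrow> length xs = m \<Longrightarrow> set xs \<subseteq> C \<Longrightarrow> p xs \<in> C"
    and s2: "sum w2 S2 = 1"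
    and pol2: "\<And>f as. f \<in> tau \<Longrightarrow> length as = m \<Longrightarrow> (\<forall>a\<in>set as. length a = ar f \<and> set a \<subseteq> C) \<Longrightarrow>
        (\<Sum>p\<in>S2. ereal (of_rat (w2 p)) *
            FG f (map (\<lambda>j. p (map (\<lambda>a. a ! j) as)) [0..<ar f]))
        \<le> ereal (1 / real m) * (\<Sum>a\<leftarrow>as. FG f a)"
    using w2 unfolding frac_pol_def S2_def by auto
  define pick :: "'d multiset \<Rightarrow> 'd list" where "pick = (\<lambda>\<alpha>. SOME xs. mset xs = \<alpha>)"
  have pick: "mset (pick \<alpha>) = \<alpha>" for \<alpha>
    unfolding pick_def by (rule someI_ex) (rule ex_mset)
  define H where "H = (\<lambda>(g::'d \<Rightarrow> 'c) (p::'c list \<Rightarrow> 'c) (\<alpha>::'d multiset). p (map g (pick \<alpha>)))"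
  define HQ where "HQ = (\<lambda>q. H (fst q) (snd q))"
  define S where "S = S1 \<times> S2"
  define T where "T = HQ ` S"
  have fS: "finite S" using fS1 fS2 S_def by simp
  have fT: "finite T" using fS T_def by simp
  define W where "W = (\<lambda>h. \<Sum>q\<in>{q\<in>S. HQ q = h}. w1 (fst q) * w2 (snd q))"
  have Wnn: "W h \<ge> 0" for h unfolding W_def using w1nn w2nn by (auto intro!: sum_nonneg)
  have suppT: "supp_w W \<subseteq> T"
  proof
    fix h assume "h \<in> supp_w W"
    then have "{q\<in>S. HQ q = h} \<noteq> {}" unfolding supp_w_def W_def by force
    then show "h \<in> T" unfolding T_def by auto
  qed
  have key: "(\<Sum>h\<in>supp_w W. ereal (of_rat (W h)) * \<phi> h) =
      (\<Sum>q\<in>S. ereal (of_rat (w1 (fst q) * w2 (snd q))) * \<phi> (HQ q))" for \<phi> :: "('d multiset \<Rightarrow> 'c) \<Rightarrow> ereal"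
  proof -
    have "(\<Sum>h\<in>supp_w W. ereal (of_rat (W h)) * \<phi> h) = (\<Sum>h\<in>T. ereal (of_rat (W h)) * \<phi> h)"
      by (rule sum.mono_neutral_left[OF fT suppT]) (auto simp: supp_w_def)
    also have "\<dots> = (\<Sum>h\<in>T. \<Sum>q\<in>{q\<in>S. HQ q = h}. ereal (of_rat (w1 (fst q) * w2 (snd q))) * \<phi> (HQ q))"
    proof (rule sum.cong[OF refl])
      fix h assume "h \<in> T"
      have "ereal (of_rat (W h)) = (\<Sum>q\<in>{q\<in>S. HQ q = h}. ereal (of_rat (w1 (fst q) * w2 (snd q))))"
        unfolding W_def by (simp add: of_rat_sum)
      then have "ereal (of_rat (W h)) * \<phi> h = (\<Sum>q\<in>{q\<in>S. HQ q = h}. ereal (of_rat (w1 (fst q) * w2 (snd q))) * \<phi> h)"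
        using sum_ereal_left_distrib[of "{q\<in>S. HQ q = h}" "\<lambda>q. ereal (of_rat (w1 (fst q) * w2 (snd q)))" "\<phi> h"]
          w1nn w2nn by simp
      then show "ereal (of_rat (W h)) * \<phi> h = (\<Sum>q\<in>{q\<in>S. HQ q = h}. ereal (of_rat (w1 (fst q) * w2 (snd q))) * \<phi> (HQ q))"
        by (auto intro: sum.cong)
    qed
    also have "\<dots> = (\<Sum>q\<in>S. ereal (of_rat (w1 (fst q) * w2 (snd q))) * \<phi> (HQ q))"
      by (rule sum.group[OF fS fT]) (simp add: T_def)
    finally show ?thesis .
  qed
  show ?thesis
  proof (intro exI[of _ W])
    have fin: "finite (supp_w W)" using finite_subset[OF suppT fT] .
    have s1': "sum W (supp_w W) = 1"
    proof -
      have "sum W (supp_w W) = sum W T"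
        by (rule sum.mono_neutral_left[OF fT suppT]) (auto simp: supp_w_def)
      also have "\<dots> = (\<Sum>q\<in>S. w1 (fst q) * w2 (snd q))"
        unfolding W_def by (rule sum.group[OF fS fT]) (simp add: T_def)
      also have "\<dots> = sum w1 S1 * sum w2 S2"
        unfolding S_def by (simp add: sum_product sum.cartesian_product case_prod_beta)
      finally show ?thesis using s1 s2 by simp
    qed
    have HC: "HQ q \<in> multiset_dom m D \<rightarrow> C" if "q \<in> S" for q
    proof
      fix \<alpha> assume "\<alpha> \<in> multiset_dom m D"
      then have a: "size \<alpha> = m" "set_mset \<alpha> \<subseteq> D" unfolding multiset_dom_def by auto
      have l: "length (pick \<alpha>) = m" using a pick[of \<alpha>] by (metis size_mset)
      have st: "set (pick \<alpha>) \<subseteq> D" using a pick[of \<alpha>] by (metis set_mset_mset)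
      have "set (map (fst q) (pick \<alpha>)) \<subseteq> C" using st S1C[of "fst q"] that S_def by (force simp: Pi_iff)
      then show "HQ q \<alpha> \<in> C" using S2C[of "snd q"] that S_def l
        unfolding HQ_def H_def by auto
    qed
    have cost: "(\<Sum>h\<in>supp_w W. ereal (of_rat (W h)) * FG f (map h a)) \<le> multiset_cost m D FD f a"
      if f: "f \<in> tau" and la: "length a = ar f" and sa: "set a \<subseteq> multiset_dom m D" for f a
    proof -
      define k where "k = length a"
      define TS where "TS = {ts. length ts = length a \<and>
            (\<forall>l<length a. length (ts ! l) = m \<and> set (ts ! l) \<subseteq> D \<and> mset (ts ! l) = a ! l)}"
      define M where "M = {(\<Sum>i<m. FD f (map (\<lambda>t. t ! i) ts)) | ts. ts \<in> TS}"
      have Meq: "multiset_cost m D FD f a = ereal (1 / real m) * Min M"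
        unfolding multiset_cost_def M_def TS_def by simp
      have TSsub: "TS \<subseteq> {xs. set xs \<subseteq> {ys. set ys \<subseteq> D \<and> length ys = m} \<and> length xs = length a}"
      proof
        fix xs assume "xs \<in> TS"
        then show "xs \<in> {xs. set xs \<subseteq> {ys. set ys \<subseteq> D \<and> length ys = m} \<and> length xs = length a}"
          unfolding TS_def by (fastforce simp: in_set_conv_nth)
      qed
      have "finite {ys. set ys \<subseteq> D \<and> length ys = m}"
        using finite_lists_length_eq[OF assms(4)] .
      then have fTS: "finite TS" using finite_subset[OF TSsub] finite_lists_length_eq by blast
      have fM: "finite M" unfolding M_def using fTS by (simp add: Setcompr_eq_image)
      have aD: "a ! l \<in> multiset_dom m D" if "l < length a" for l using sa that by auto
      have "map pick a \<in> TS"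
      proof -
        have "length (pick (a ! l)) = m \<and> set (pick (a ! l)) \<subseteq> D \<and> mset (pick (a ! l)) = a ! l"
          if "l < length a" for l
        proof -
          have "size (a ! l) = m" "set_mset (a ! l) \<subseteq> D" using aD[OF that] unfolding multiset_dom_def by auto
          then show ?thesis using pick[of "a ! l"] by (metis set_mset_mset size_mset)
        qed
        then show ?thesis unfolding TS_def by auto
      qed
      then have neM: "M \<noteq> {}" unfolding M_def by blast
      obtain ts where ts: "ts \<in> TS" and tsmin: "Min M = (\<Sum>i<m. FD f (map (\<lambda>t. t ! i) ts))"
        using Min_in[OF fM neM] unfolding M_def by blast
      define col where "col = (\<lambda>i. map (\<lambda>t. t ! i) ts)"
      have lts: "length ts = ar f" and tsl: "\<And>l. l < ar f \<Longrightarrow> length (ts ! l) = m \<and> set (ts ! l) \<subseteq> D \<and> mset (ts ! l) = a ! l"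
        using ts la unfolding TS_def by auto
      have lcol: "length (col i) = ar f" for i unfolding col_def using lts by simp
      have scol: "set (col i) \<subseteq> D" if "i < m" for i
      proof
        fix x assume "x \<in> set (col i)"
        then obtain l where l: "l < ar f" "x = ts ! l ! i" unfolding col_def using lts by (auto simp: in_set_conv_nth)
        then show "x \<in> D" using tsl[OF l(1)] that by (metis nth_mem subsetD)
      qed
      have FGnm: "FG f xs \<noteq> -\<infinity>" if "length xs = ar f" "set xs \<subseteq> C" for xs
      proof -
        have "rat_or_inf (FG f xs)" using assms(2) f that unfolding valued_structure_def by blast
        then show ?thesis by (rule roi_not_minf)
      qed
      have FDnm: "FD f xs \<noteq> -\<infinity>" if "length xs = ar f" "set xs \<subseteq> D" for xs
      proof -
        have "rat_or_inf (FD f xs)" using assms(3) f that unfolding valued_structure_def by blast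
        then show ?thesis by (rule roi_not_minf)
      qed
      define asg :: "('d \<Rightarrow> 'c) \<Rightarrow> 'c list list" where "asg = (\<lambda>g. map (\<lambda>i. map g (col i)) [0..<m])"
      have gC: "set (map g xs) \<subseteq> C" if "g \<in> S1" "set xs \<subseteq> D" for g xs
        using S1C[OF that(1)] that(2) by (force simp: Pi_iff)
      have Hrep: "map (HQ q) a = map (\<lambda>j. snd q (map (\<lambda>a. a ! j) (asg (fst q)))) [0..<ar f]"
        if q: "q \<in> S" for q
      proof (rule nth_equalityI)
        show "length (map (HQ q) a) = length (map (\<lambda>j. snd q (map (\<lambda>a. a ! j) (asg (fst q)))) [0..<ar f])"
          using la by simp
        fix l assume "l < length (map (HQ q) a)"
        then have l: "l < ar f" using la by simp
        have gq: "fst q \<in> S1" "snd q \<in> S2" using q S_def by auto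
        have e1: "map (\<lambda>a. a ! l) (asg (fst q)) = map (fst q) (ts ! l)"
          using tsl[OF l] l lts unfolding asg_def col_def
          by (auto intro!: nth_equalityI)
        have "HQ q (a ! l) = snd q (map (fst q) (pick (a ! l)))" unfolding HQ_def H_def by simp
        also have "\<dots> = snd q (map (fst q) (ts ! l))"
          using sym_eq[OF sy, of "snd q" "pick (a ! l)" "ts ! l" D "fst q"] gq tsl[OF l] pick[of "a ! l"]
            S1C[OF gq(1)] unfolding S2_def by auto
        finally show "map (HQ q) a ! l = map (\<lambda>j. snd q (map (\<lambda>a. a ! j) (asg (fst q)))) [0..<ar f] ! l"
          using l la e1 by simp
      qed
      have HQC: "set (map (HQ q) a) \<subseteq> C" if "q \<in> S" for q
        using HC[OF that] sa by auto
      have "(\<Sum>h\<in>supp_w W. ereal (of_rat (W h)) * FG f (map h a))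
          = (\<Sum>q\<in>S. ereal (of_rat (w1 (fst q) * w2 (snd q))) * FG f (map (HQ q) a))"
        by (rule key)
      also have "\<dots> = (\<Sum>g\<in>S1. \<Sum>p\<in>S2. ereal (of_rat (w1 g)) * (ereal (of_rat (w2 p)) * FG f (map (HQ (g, p)) a)))"
        unfolding S_def sum.cartesian_product by (intro sum.cong) (auto simp: of_rat_mult mult.assoc simp flip: times_ereal.simps(1))
      also have "\<dots> = (\<Sum>g\<in>S1. ereal (of_rat (w1 g)) * (\<Sum>p\<in>S2. ereal (of_rat (w2 p)) * FG f (map (HQ (g, p)) a)))"
      proof (rule sum.cong[OF refl])
        fix g assume g: "g \<in> S1"
        show "(\<Sum>p\<in>S2. ereal (of_rat (w1 g)) * (ereal (of_rat (w2 p)) * FG f (map (HQ (g, p)) a)))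
          = ereal (of_rat (w1 g)) * (\<Sum>p\<in>S2. ereal (of_rat (w2 p)) * FG f (map (HQ (g, p)) a))"
        proof -
          have "\<forall>p\<in>S2. ereal (of_rat (w2 p)) * FG f (map (HQ (g, p)) a) \<noteq> -\<infinity>"
          proof
            fix p assume p: "p \<in> S2"
            have "(g, p) \<in> S" using g p S_def by simp
            then have "FG f (map (HQ (g, p)) a) \<noteq> -\<infinity>" using HQC la by (intro FGnm) auto
            then show "ereal (of_rat (w2 p)) * FG f (map (HQ (g, p)) a) \<noteq> -\<infinity>"
              using w2nn[of p] by (intro ereal_c_mult_not_minf) auto
          qed
          then show ?thesis using w1nn[of g] by (intro sum_c_distrib[symmetric]) auto
        qed
      qed
      also have "\<dots> \<le> (\<Sum>g\<in>S1. ereal (of_rat (w1 g)) * (ereal (1 / real m) * (\<Sum>i<m. FG f (map g (col i)))))"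
      proof (rule sum_mono)
        fix g assume g: "g \<in> S1"
        have "(\<Sum>p\<in>S2. ereal (of_rat (w2 p)) * FG f (map (HQ (g, p)) a))
            = (\<Sum>p\<in>S2. ereal (of_rat (w2 p)) * FG f (map (\<lambda>j. p (map (\<lambda>a. a ! j) (asg g))) [0..<ar f]))"
          using Hrep g by (auto simp: S_def intro!: sum.cong)
        also have "\<dots> \<le> ereal (1 / real m) * (\<Sum>x\<leftarrow>asg g. FG f x)"
          using g lcol scol gC by (intro pol2[OF f]) (auto simp: asg_def)
        also have "(\<Sum>x\<leftarrow>asg g. FG f x) = (\<Sum>i<m. FG f (map g (col i)))"
          unfolding asg_def by (simp add: interv_sum_list_conv_sum_set_nat atLeast0LessThan comp_def)
        finally show "ereal (of_rat (w1 g)) * (\<Sum>p\<in>S2. ereal (of_rat (w2 p)) * FG f (map (HQ (g, p)) a))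
            \<le> ereal (of_rat (w1 g)) * (ereal (1 / real m) * (\<Sum>i<m. FG f (map g (col i))))"
          using w1nn[of g] by (intro ereal_mult_left_mono) auto
      qed
      also have "\<dots> = (\<Sum>g\<in>S1. ereal (1 / real m) * (\<Sum>i<m. ereal (of_rat (w1 g)) * FG f (map g (col i))))"
      proof (rule sum.cong[OF refl])
        fix g assume g: "g \<in> S1"
        have "ereal (of_rat (w1 g)) * (\<Sum>i<m. FG f (map g (col i))) = (\<Sum>i<m. ereal (of_rat (w1 g)) * FG f (map g (col i)))"
        proof -
          have "\<forall>i\<in>{..<m}. FG f (map g (col i)) \<noteq> -\<infinity>"
            using FGnm gC[OF g scol] lcol by simp
          then show ?thesis using w1nn[of g] by (intro sum_c_distrib) auto
        qed
        then show "ereal (of_rat (w1 g)) * (ereal (1 / real m) * (\<Sum>i<m. FG f (map g (col i))))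
          = ereal (1 / real m) * (\<Sum>i<m. ereal (of_rat (w1 g)) * FG f (map g (col i)))"
          by (metis mult.left_commute)
      qed
      also have "\<dots> = ereal (1 / real m) * (\<Sum>g\<in>S1. \<Sum>i<m. ereal (of_rat (w1 g)) * FG f (map g (col i)))"
      proof -
        have "\<forall>g\<in>S1. (\<Sum>i<m. ereal (of_rat (w1 g)) * FG f (map g (col i))) \<noteq> -\<infinity>"
        proof
          fix g assume g: "g \<in> S1"
          have "\<forall>i\<in>{..<m}. ereal (of_rat (w1 g)) * FG f (map g (col i)) \<noteq> -\<infinity>"
          proof
            fix i assume "i \<in> {..<m}"
            then have "FG f (map g (col i)) \<noteq> -\<infinity>" using FGnm gC[OF g scol] lcol by simp
            then show "ereal (of_rat (w1 g)) * FG f (map g (col i)) \<noteq> -\<infinity>"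
              using w1nn[of g] by (intro ereal_c_mult_not_minf) auto
          qed
          then show "(\<Sum>i<m. ereal (of_rat (w1 g)) * FG f (map g (col i))) \<noteq> -\<infinity>"
            by (rule sum_not_minf)
        qed
        then show ?thesis by (intro sum_c_distrib[symmetric]) auto
      qed
      also have "\<dots> = ereal (1 / real m) * (\<Sum>i<m. \<Sum>g\<in>S1. ereal (of_rat (w1 g)) * FG f (map g (col i)))"
        by (simp add: sum.swap[of _ S1])
      also have "\<dots> \<le> ereal (1 / real m) * (\<Sum>i<m. FD f (col i))"
        using lcol scol by (intro ereal_mult_left_mono sum_mono hom1[OF f]) auto
      also have "\<dots> = multiset_cost m D FD f a"
        using Meq tsmin unfolding col_def by simp
      finally show ?thesis .
    qed
    show "frac_hom tau ar (multiset_dom m D) (multiset_cost m D FD) C FG W"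
    proof -
      have "h \<in> multiset_dom m D \<rightarrow> C" if "h \<in> supp_w W" for h
        using suppT that HC unfolding T_def by blast
      then show ?thesis unfolding frac_hom_def using fin Wnn s1' cost by blast
    qed
  qed
qed

end
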